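(* In the standing setting below, let $2\leq\ell\leq k-2$ and define $M^0$ as the set of $k$-cycles $(x_1,\dots,x_k)\in X_1\times\dots\times X_k$ such that $(x_1,\dots,x_\ell)$ is a bad $[\ell]$-tuple and $(x_1,\dots,x_{\ell-1})$ is not a bad $[\ell-1]$-tuple. For $j=\ell+2,\dots,k$ let $M_j$ be the set of $(x_1,\dots,x_k)\in M^0$ such that $(x_1,\dots,x_{\ell-1},x_j)$ is not a bad $([\ell-1]\cup\{j\})$-tuple, and let $M'=M^0\setminus(M_{\ell+2}\cup\dots\cup M_k)$. Then $|M'|\leq\frac12|M^0|$.
   Context: Let $p$ be a fixed prime, $n\geq1$, $N=p^n$, $[m]=\{1,\dots,m\}$. For sets $X_1,\dots,X_k\subseteq\mathbb{F}_p^n$, a $k$-cycle is a tuple $(x_1,\dots,x_k)\in X_1\times\dots\times X_k$ with $x_1+\dots+x_k=0$. Standing setting: $k\geq4$, $X_1,\dots,X_k\subseteq\mathbb{F}_p^n$, the number of $k$-cycles in $X_1\times\dots\times X_k$ equals $\delta'N^{k-1}$ with $\delta'>0$, and $\theta\geq 1$ is such that for each $i\in[k]$ every point of $X_i$ occurs as $x_i$ in at most $\theta\delta'N^{k-2}$ $k$-cycles. Put $\alpha=(\theta\delta')^{1/(k-2)}$. For $I\subseteq[k]$ with $1\leq|I|\leq k-2$, an $I$-tuple is an element $(x_i)_{i\in I}\in\prod_{i\in I}X_i$; it is called bad if there are at least $2\alpha^{k-|I|-1}N^{k-|I|-1}$ $k$-cycles $(x_1,\dots,x_k)\in X_1\times\dots\times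 X_k$ whose coordinates indexed by $I$ coincide with the given tuple. *)

theory Defs
  imports "HOL-Analysis.Finite_Cartesian_Product" "Berlekamp_Zassenhaus.Finite_Field"
begin

text \<open>The ambient group F_p^n is modelled as the type ('p mod_ring)^'n with 'p of
  class prime_card (so CARD('p) = p is prime) and 'n a finite index type (n = CARD('n) >= 1).
  A tuple (x_1,...,x_k) is an extensional function on {1..k}.\<close>

definition kcycles :: "nat \<Rightarrow> (nat \<Rightarrow> ('p::prime_card mod_ring ^ 'n) set)
    \<Rightarrow> (nat \<Rightarrow> 'p mod_ring ^ 'n) set" where
  "kcycles k X = {x \<in> PiE {1..k} X. (\<Sum>i\<in>{1..k}. x i) = 0}"

definition ext_count :: "nat \<Rightarrow> (nat \<Rightarrow> ('p::prime_card mod_ring ^ 'n) set) \<Rightarrow> nat set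
    \<Rightarrow> (nat \<Rightarrow> 'p mod_ring ^ 'n) \<Rightarrow> nat" where
  "ext_count k X I y = card {x \<in> kcycles k X. \<forall>i\<in>I. x i = y i}"

definition bad_tuple :: "nat \<Rightarrow> (nat \<Rightarrow> ('p::prime_card mod_ring ^ 'n) set) \<Rightarrow> real \<Rightarrow> real
    \<Rightarrow> nat set \<Rightarrow> (nat \<Rightarrow> 'p mod_ring ^ 'n) \<Rightarrow> bool" where
  "bad_tuple k X \<alpha> N I y \<longleftrightarrow> y \<in> PiE I X \<and>
     real (ext_count k X I y) \<ge> 2 * \<alpha> ^ (k - card I - 1) * N ^ (k - card I - 1)"

end

theory Submission
  imports Defs
begin

lemma card_fibers:
  assumes "finite S" "finite T" "g ` S \<subseteq> T"
  shows "card S = (\<Sum>y\<in>T. card {x\<in>S. g x = y})"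
proof -
  have "(\<Sum>y\<in>T. \<Sum>x\<in>{x. x \<in> S \<and> g x = y}. (1::nat)) = (\<Sum>x\<in>S. 1)"
    by (rule sum.group[OF assms])
  then show ?thesis by simp
qed

lemma finite_kcycles: "finite (kcycles k (X :: nat \<Rightarrow> ('p::prime_card mod_ring ^ 'n) set))"
proof -
  have "kcycles k X \<subseteq> PiE {1..k} (\<lambda>_. UNIV)"
    unfolding kcycles_def by (auto simp: PiE_def Pi_def)
  moreover have "finite (PiE {1..k} (\<lambda>_. (UNIV :: ('p mod_ring ^ 'n) set)))"
    by (rule finite_PiE) auto
  ultimately show ?thesis by (rule finite_subset)
qed

theorem lemma7:
  fixes X :: "nat \<Rightarrow> ('p::prime_card mod_ring ^ 'n) set"
    and k l :: nat and \<delta>' \<theta> :: real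
  defines "N \<equiv> real (CARD('p) ^ CARD('n))"
  defines "\<alpha> \<equiv> root (k - 2) (\<theta> * \<delta>')"
  defines "M0 \<equiv> {x \<in> kcycles k X.
              bad_tuple k X \<alpha> N {1..l} (restrict x {1..l}) \<and>
              \<not> bad_tuple k X \<alpha> N {1..l-1} (restrict x {1..l-1})}"
  defines "M \<equiv> (\<lambda>j. {x \<in> M0.
              \<not> bad_tuple k X \<alpha> N ({1..l-1} \<union> {j}) (restrict x ({1..l-1} \<union> {j}))})"
  assumes k: "k \<ge> 4"
    and cnt: "real (card (kcycles k X)) = \<delta>' * N ^ (k - 1)"
    and dpos: "\<delta>' > 0"
    and th: "\<theta> \<ge> 1"
    and deg: "\<And>i a. i \<in> {1..k} \<Longrightarrow> a \<in> X i \<Longrightarrow>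
               real (card {x \<in> kcycles k X. x i = a}) \<le> \<theta> * \<delta>' * N ^ (k - 2)"
    and l: "2 \<le> l" "l \<le> k - 2"
  shows "real (card (M0 - (\<Union>j\<in>{l+2..k}. M j))) \<le> real (card M0) / 2"
proof -
  define A where "A = {1..l-1}"
  define L where "L = {1..l}"
  define J where "J = {l+2..k}"
  define M' where "M' = M0 - (\<Union>j\<in>J. M j)"
  define c where "c = (\<alpha> * N) ^ (k - l - 1)"
  have Npos: "N > 0" unfolding N_def by simp
  have apos: "\<alpha> > 0" unfolding \<alpha>_def using k th dpos by (intro real_root_gt_zero) auto
  have cpos: "c > 0" unfolding c_def using Npos apos by simp
  have fK: "finite (kcycles k X)" by (rule finite_kcycles)
  have M0K: "M0 \<subseteq> kcycles k X" unfolding M0_def by auto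
  have fM0: "finite M0" using M0K fK finite_subset by blast
  have M'M0: "M' \<subseteq> M0" unfolding M'_def by auto
  have fM': "finite M'" using M'M0 fM0 finite_subset by blast
  have AL: "A \<subseteq> L" unfolding A_def L_def by auto
  have cardA: "card A = l - 1" unfolding A_def by simp
  have cardL: "card L = l" unfolding L_def by simp
  have inK: "\<And>x i. x \<in> kcycles k X \<Longrightarrow> i \<in> {1..k} \<Longrightarrow> x i \<in> X i"
    unfolding kcycles_def by (auto simp: PiE_def Pi_def)
  have fiber: "2 * card {x\<in>M'. restrict x L = u} \<le> card {x\<in>M0. restrict x L = u}"
    if u: "u \<in> (\<lambda>x. restrict x L) ` M0" for u
  proof -
    obtain x0 where x0: "x0 \<in> M0" "u = restrict x0 L" using u by blast
    define Fu where "Fu = {x\<in>M0. restrict x L = u}"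
    define Gu where "Gu = {x\<in>M'. restrict x L = u}"
    have Fu_eq: "Fu = {x\<in>kcycles k X. \<forall>i\<in>L. x i = u i}"
    proof
      show "Fu \<subseteq> {x\<in>kcycles k X. \<forall>i\<in>L. x i = u i}"
        unfolding Fu_def using M0K by (auto simp: restrict_def fun_eq_iff)
    next
      show "{x\<in>kcycles k X. \<forall>i\<in>L. x i = u i} \<subseteq> Fu"
      proof
        fix x assume x: "x \<in> {x\<in>kcycles k X. \<forall>i\<in>L. x i = u i}"
        have eL: "restrict x L = restrict x0 L"
          using x x0(2) by (auto simp: restrict_def fun_eq_iff)
        have eA: "restrict x A = restrict x0 A"
          using x x0(2) AL by (auto simp: restrict_def fun_eq_iff split: if_splits)
        show "x \<in> Fu" using x x0 eL eA unfolding Fu_def M0_def A_def L_def by auto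
      qed
    qed
    have cardFu: "real (card Fu) \<ge> 2 * c"
    proof -
      have "bad_tuple k X \<alpha> N L u" using x0 unfolding M0_def L_def by auto
      then have "real (ext_count k X L u) \<ge> 2 * \<alpha> ^ (k - l - 1) * N ^ (k - l - 1)"
        unfolding bad_tuple_def cardL by auto
      moreover have "ext_count k X L u = card Fu" unfolding ext_count_def Fu_eq by simp
      ultimately show ?thesis unfolding c_def by (simp add: power_mult_distrib)
    qed
    define B where "B = (\<lambda>j. (\<lambda>x. x j) ` Gu)"
    have fGu: "finite Gu" unfolding Gu_def using fM' by simp
    have GuK: "Gu \<subseteq> kcycles k X" unfolding Gu_def using M'M0 M0K by auto
    have GuA: "\<And>x i. x \<in> Gu \<Longrightarrow> i \<in> A \<Longrightarrow> x i = x0 i"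
      unfolding Gu_def using x0(2) AL by (auto simp: restrict_def fun_eq_iff split: if_splits)
    have GuL: "\<And>x i. x \<in> Gu \<Longrightarrow> i \<in> L \<Longrightarrow> x i = x0 i"
      unfolding Gu_def using x0(2) by (auto simp: restrict_def fun_eq_iff split: if_splits)
    have Bbound: "real (card (B j)) \<le> \<alpha> * N" if j: "j \<in> J" for j
    proof -
      define E where "E = {w\<in>kcycles k X. \<forall>i\<in>A. w i = x0 i}"
      define S where "S = (\<lambda>z. {w\<in>kcycles k X. (\<forall>i\<in>A. w i = x0 i) \<and> w j = z})"
      have x0K: "x0 \<in> kcycles k X" using x0 M0K by auto
      have notbad: "\<not> bad_tuple k X \<alpha> N A (restrict x0 A)"
        using x0 unfolding M0_def A_def by auto
      have inPi: "restrict x0 A \<in> PiE A X"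
        using inK[OF x0K] unfolding A_def using l by (auto simp: Pi_def)
      have "real (ext_count k X A (restrict x0 A)) < 2 * \<alpha> ^ (k - card A - 1) * N ^ (k - card A - 1)"
        using notbad inPi unfolding bad_tuple_def by auto
      moreover have "ext_count k X A (restrict x0 A) = card E"
        unfolding ext_count_def E_def by simp
      moreover have "k - card A - 1 = Suc (k - l - 1)" using cardA l by auto
      ultimately have Ebound: "real (card E) < 2 * c * (\<alpha> * N)"
        unfolding c_def by (simp add: power_mult_distrib algebra_simps)
      have jA: "j \<notin> A" using j unfolding J_def A_def by auto
      have Sbig: "real (card (S z)) \<ge> 2 * c" if z: "z \<in> B j" for z
      proof -
        obtain x where x: "x \<in> Gu" "z = x j" using z unfolding B_def by blast
        have "x \<in> M'" using x unfolding Gu_def by auto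
        then have "x \<notin> M j" using j unfolding M'_def by auto
        moreover have "x \<in> M0" using \<open>x \<in> M'\<close> M'M0 by auto
        ultimately have bad: "bad_tuple k X \<alpha> N (A \<union> {j}) (restrict x (A \<union> {j}))"
          unfolding M_def A_def by auto
        have cAj: "card (A \<union> {j}) = l" using cardA jA l by (simp add: A_def)
        have "ext_count k X (A \<union> {j}) (restrict x (A \<union> {j})) = card (S z)"
          unfolding ext_count_def S_def using GuA[OF x(1)] x(2)
          by (intro arg_cong[where f=card]) auto
        then show ?thesis using bad cAj unfolding bad_tuple_def c_def
          by (simp add: power_mult_distrib)
      qed
      have fB: "finite (B j)" unfolding B_def using fGu by simp
      have disj: "\<forall>z\<in>B j. \<forall>z'\<in>B j. z \<noteq> z' \<longrightarrow> S z \<inter> S z' = {}"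
        unfolding S_def by auto
      have fS: "\<forall>z\<in>B j. finite (S z)" unfolding S_def using fK by auto
      have "(\<Sum>z\<in>B j. card (S z)) = card (\<Union>(S ` B j))"
        using card_UN_disjoint[OF fB fS disj] by simp
      also have "\<dots> \<le> card E"
        using fK unfolding E_def S_def by (intro card_mono) auto
      finally have "real (\<Sum>z\<in>B j. card (S z)) \<le> real (card E)" by linarith
      moreover have "real (card (B j)) * (2 * c) \<le> real (\<Sum>z\<in>B j. card (S z))"
      proof -
        have "(\<Sum>z\<in>B j. 2 * c) \<le> (\<Sum>z\<in>B j. real (card (S z)))"
          using Sbig by (intro sum_mono) auto
        then show ?thesis by (simp add: of_nat_sum)
      qed
      ultimately have "real (card (B j)) * (2 * c) < (\<alpha> * N) * (2 * c)"
        using Ebound by (simp add: algebra_simps)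
      then show ?thesis using cpos by simp
    qed
    have inj: "inj_on (\<lambda>x. restrict x J) Gu"
    proof
      fix x y assume x: "x \<in> Gu" and y: "y \<in> Gu" and e: "restrict x J = restrict y J"
      have xK: "x \<in> kcycles k X" and yK: "y \<in> kcycles k X" using x y GuK by auto
      have eJ: "\<And>i. i \<in> J \<Longrightarrow> x i = y i" using e by (metis restrict_apply')
      have eO: "\<And>i. i \<in> {1..k} - {l+1} \<Longrightarrow> x i = y i"
      proof -
        fix i assume i: "i \<in> {1..k} - {l+1}"
        show "x i = y i"
        proof (cases "i \<in> L")
          case True then show ?thesis using GuL[OF x] GuL[OF y] by simp
        next
          case False then have "i \<in> J" using i unfolding L_def J_def by auto
          then show ?thesis using eJ by simp
        qed
      qed
      have lk: "l + 1 \<in> {1..k}" using l by auto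
      have sx: "(\<Sum>i\<in>{1..k}. x i) = 0" and sy: "(\<Sum>i\<in>{1..k}. y i) = 0"
        using xK yK unfolding kcycles_def by auto
      have "x (l+1) + (\<Sum>i\<in>{1..k} - {l+1}. x i) = y (l+1) + (\<Sum>i\<in>{1..k} - {l+1}. y i)"
        using sx sy sum.remove[OF _ lk, of x] sum.remove[OF _ lk, of y] by simp
      moreover have "(\<Sum>i\<in>{1..k} - {l+1}. x i) = (\<Sum>i\<in>{1..k} - {l+1}. y i)"
        using eO by (rule sum.cong[OF refl])
      ultimately have e1: "x (l+1) = y (l+1)" by simp
      have "x \<in> PiE {1..k} X" "y \<in> PiE {1..k} X" using xK yK unfolding kcycles_def by auto
      then show "x = y"
        by (rule PiE_ext) (metis eO e1 DiffI singletonD)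
    qed
    have img: "(\<lambda>x. restrict x J) ` Gu \<subseteq> PiE J B"
      unfolding B_def by auto
    have fJ: "finite J" unfolding J_def by simp
    have "card Gu \<le> card (PiE J B)"
      using card_inj_on_le[OF inj img] finite_PiE[OF fJ] fGu
      by (metis B_def finite_imageI)
    also have "\<dots> = (\<Prod>j\<in>J. card (B j))" by (rule card_PiE[OF fJ])
    finally have "real (card Gu) \<le> (\<Prod>j\<in>J. real (card (B j)))"
      by (metis of_nat_le_iff of_nat_prod)
    also have "\<dots> \<le> (\<Prod>j\<in>J. \<alpha> * N)"
      using Bbound by (intro prod_mono) auto
    also have "\<dots> = c" unfolding c_def J_def by simp
    finally have "real (card Gu) \<le> c" .
    then have "real (2 * card Gu) \<le> real (card Fu)" using cardFu by simp
    then show ?thesis unfolding Fu_def Gu_def by linarith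
  qed
  define U where "U = (\<lambda>x. restrict x L) ` M0"
  have fU: "finite U" unfolding U_def using fM0 by simp
  have c0: "card M0 = (\<Sum>u\<in>U. card {x\<in>M0. restrict x L = u})"
    by (rule card_fibers[OF fM0 fU]) (simp add: U_def)
  have c1: "card M' = (\<Sum>u\<in>U. card {x\<in>M'. restrict x L = u})"
    by (rule card_fibers[OF fM' fU]) (use M'M0 in \<open>auto simp: U_def\<close>)
  have "2 * card M' \<le> card M0"
    unfolding c0 c1 sum_distrib_left using fiber unfolding U_def by (intro sum_mono) auto
  then show ?thesis unfolding M'_def J_def by simp
qed

end
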